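(* Let $G$ be an \{ISK4,wheel\}-free trigraph. Then $G$ admits a clique-cutset or a stable 2-cutset if and only if $G$ admits a good cut-partition.
   Context: A trigraph $G$ consists of a finite vertex set $V(G)$ and an adjacency function $\theta_G:\binom{V(G)}{2}\to\{-1,0,1\}$; for distinct $u,v$ write $uv$ for $\{u,v\}$. The pair $uv$ is strongly adjacent if $\theta_G(uv)=1$, semi-adjacent if $\theta_G(uv)=0$, strongly anti-adjacent if $\theta_G(uv)=-1$; $u,v$ are adjacent if $\theta_G(uv)\ge 0$ and anti-adjacent if $\theta_G(uv)\le 0$. For $X\subseteq V(G)$, $G[X]$ is the trigraph on $X$ with the restricted adjacency function, and $G\setminus X=G[V(G)\setminus X]$. A realization of $G$ is a graph on $V(G)$ obtained by turning each semi-adjacent pair into either an edge or a non-edge (strongly adjacent pairs are edges, strongly anti-adjacent pairs non-edges); the full realization turns all semi-adjacent pairs into edges. A stable set is a set of pairwise anti-adjacent vertices; a strong clique is a set of pairwise strongly adjacent vertices. $G$ is connected if its full realization is connected. A narrow path in $G$ between $a$ and $b$ is an induced subtrigraph whose full realization is a path with endpoints $a$ and $b$. An ISK4 is a graph isomorphic to a subdivision of $K_4$. A wheel is a graph consisting of a chordless cycle of length at least four together with a vertex having at least three neighbors on the cycle. A trigraph is \{ISK4,wheel\}-free if none of its realizations has an induced subgraph that is an ISK4 or a wheel. A cut-partition of $G$ is a partition $(A,B,C)$ of $V(G)$ with $A,B$ non-empty ($C$ possibly empty) such that every vertex of $A$ is strongly anti-adjacent to every vertex of $B$. A clique-cutset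 is a (possibly empty) strong clique $C$ with $G\setminus C$ disconnected; a stable 2-cutset is a stable set $C$ of size two with $G\setminus C$ disconnected. A good cut-partition is a cut-partition $(A,B,C)$ such that either $C$ is a clique-cutset with $|C|\le 3$ (type clique), or $C$ is a stable 2-cutset and each of $G[A\cup C]$ and $G[B\cup C]$ contains a narrow path between the two vertices of $C$ (type stable). *)

theory Defs
  imports Main
begin

definition trigraph :: "'a set \<Rightarrow> ('a set \<Rightarrow> int) \<Rightarrow> bool" where
  "trigraph V \<theta> \<longleftrightarrow> finite V \<and>
     (\<forall>u\<in>V. \<forall>v\<in>V. u \<noteq> v \<longrightarrow> \<theta> {u,v} \<in> {-1, 0, 1})"

definition realization :: "'a set \<Rightarrow> ('a set \<Rightarrow> int) \<Rightarrow> 'a set set \<Rightarrow> bool" where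
  "realization V \<theta> E \<longleftrightarrow>
     E \<subseteq> {{u,v} | u v. u \<in> V \<and> v \<in> V \<and> u \<noteq> v} \<and>
     (\<forall>u\<in>V. \<forall>v\<in>V. u \<noteq> v \<longrightarrow>
        (\<theta> {u,v} = 1 \<longrightarrow> {u,v} \<in> E) \<and> (\<theta> {u,v} = -1 \<longrightarrow> {u,v} \<notin> E))"

definition induced_edges :: "'a set set \<Rightarrow> 'a set \<Rightarrow> 'a set set" where
  "induced_edges E X = {e \<in> E. e \<subseteq> X}"

definition path_edges :: "'a list \<Rightarrow> 'a set set" where
  "path_edges p = {{p ! k, p ! Suc k} | k. Suc k < length p}"

definition cycle_edges :: "'a list \<Rightarrow> 'a set set" where
  "cycle_edges c = {{c ! k, c ! ((Suc k) mod length c)} | k. k < length c}"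

text \<open>The graph (W,F) is a subdivision of K4: four distinct branch vertices b 0..b 3,
  and for each pair i<j a path P i j from b i to b j, the paths being internally
  vertex-disjoint and avoiding the other branch vertices; W and F are exactly
  the vertices and edges of these paths.\<close>

definition is_isk4 :: "'a set \<Rightarrow> 'a set set \<Rightarrow> bool" where
  "is_isk4 W F \<longleftrightarrow> (\<exists>(b :: nat \<Rightarrow> 'a) (P :: nat \<Rightarrow> nat \<Rightarrow> 'a list).
     inj_on b {..<4} \<and>
     (\<forall>i j. i < j \<and> j < 4 \<longrightarrow>
        distinct (P i j) \<and> 2 \<le> length (P i j) \<and>
        hd (P i j) = b i \<and> last (P i j) = b j \<and>
        set (P i j) \<inter> b ` {..<4} = {b i, b j}) \<and>
     (\<forall>i j k l. i < j \<and> j < 4 \<and> k < l \<and> l < 4 \<and> (i, j) \<noteq> (k, l) \<longrightarrow>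
        set (P i j) \<inter> set (P k l) \<subseteq> b ` {..<4}) \<and>
     W = (\<Union>{set (P i j) | i j. i < j \<and> j < 4}) \<and>
     F = (\<Union>{path_edges (P i j) | i j. i < j \<and> j < 4}))"

definition is_wheel :: "'a set \<Rightarrow> 'a set set \<Rightarrow> bool" where
  "is_wheel W F \<longleftrightarrow> (\<exists>c x N.
     distinct c \<and> 4 \<le> length c \<and> x \<notin> set c \<and>
     N \<subseteq> set c \<and> 3 \<le> card N \<and>
     W = insert x (set c) \<and>
     F = cycle_edges c \<union> {{x, y} | y. y \<in> N})"

definition isk4_wheel_free :: "'a set \<Rightarrow> ('a set \<Rightarrow> int) \<Rightarrow> bool" where
  "isk4_wheel_free V \<theta> \<longleftrightarrow>
     (\<forall>E X. realization V \<theta> E \<and> X \<subseteq> V \<longrightarrow>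
        \<not> is_isk4 X (induced_edges E X) \<and> \<not> is_wheel X (induced_edges E X))"

text \<open>Connectivity of the full realization of G[S].\<close>

definition adjacent :: "('a set \<Rightarrow> int) \<Rightarrow> 'a \<Rightarrow> 'a \<Rightarrow> bool" where
  "adjacent \<theta> u v \<longleftrightarrow> u \<noteq> v \<and> \<theta> {u,v} \<ge> 0"

definition connected_sub :: "('a set \<Rightarrow> int) \<Rightarrow> 'a set \<Rightarrow> bool" where
  "connected_sub \<theta> S \<longleftrightarrow>
     (\<forall>u\<in>S. \<forall>v\<in>S. (\<lambda>x y. x \<in> S \<and> y \<in> S \<and> adjacent \<theta> x y)\<^sup>*\<^sup>* u v)"

definition strong_clique :: "'a set \<Rightarrow> ('a set \<Rightarrow> int) \<Rightarrow> 'a set \<Rightarrow> bool" where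
  "strong_clique V \<theta> C \<longleftrightarrow> C \<subseteq> V \<and> (\<forall>u\<in>C. \<forall>v\<in>C. u \<noteq> v \<longrightarrow> \<theta> {u,v} = 1)"

definition stable_set :: "'a set \<Rightarrow> ('a set \<Rightarrow> int) \<Rightarrow> 'a set \<Rightarrow> bool" where
  "stable_set V \<theta> C \<longleftrightarrow> C \<subseteq> V \<and> (\<forall>u\<in>C. \<forall>v\<in>C. u \<noteq> v \<longrightarrow> \<theta> {u,v} \<le> 0)"

definition clique_cutset :: "'a set \<Rightarrow> ('a set \<Rightarrow> int) \<Rightarrow> 'a set \<Rightarrow> bool" where
  "clique_cutset V \<theta> C \<longleftrightarrow> strong_clique V \<theta> C \<and> \<not> connected_sub \<theta> (V - C)"

definition stable_2cutset :: "'a set \<Rightarrow> ('a set \<Rightarrow> int) \<Rightarrow> 'a set \<Rightarrow> bool" where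
  "stable_2cutset V \<theta> C \<longleftrightarrow> stable_set V \<theta> C \<and> card C = 2 \<and> \<not> connected_sub \<theta> (V - C)"

definition cut_partition :: "'a set \<Rightarrow> ('a set \<Rightarrow> int) \<Rightarrow> 'a set \<Rightarrow> 'a set \<Rightarrow> 'a set \<Rightarrow> bool" where
  "cut_partition V \<theta> A B C \<longleftrightarrow>
     A \<union> B \<union> C = V \<and> A \<inter> B = {} \<and> A \<inter> C = {} \<and> B \<inter> C = {} \<and>
     A \<noteq> {} \<and> B \<noteq> {} \<and> (\<forall>a\<in>A. \<forall>b\<in>B. \<theta> {a,b} = -1)"

text \<open>A narrow path between a and b in G[Y]: an induced subtrigraph G[set p], set p \<subseteq> Y,
  whose full realization is the path p from a to b.\<close>

definition narrow_path :: "('a set \<Rightarrow> int) \<Rightarrow> 'a set \<Rightarrow> 'a \<Rightarrow> 'a \<Rightarrow> bool" where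
  "narrow_path \<theta> Y a b \<longleftrightarrow> (\<exists>p. distinct p \<and> p \<noteq> [] \<and> hd p = a \<and> last p = b \<and> set p \<subseteq> Y \<and>
     (\<forall>i<length p. \<forall>j<length p. i \<noteq> j \<longrightarrow>
        (\<theta> {p ! i, p ! j} \<ge> 0 \<longleftrightarrow> (i = Suc j \<or> j = Suc i))))"

definition good_cut_partition :: "'a set \<Rightarrow> ('a set \<Rightarrow> int) \<Rightarrow> 'a set \<Rightarrow> 'a set \<Rightarrow> 'a set \<Rightarrow> bool" where
  "good_cut_partition V \<theta> A B C \<longleftrightarrow> cut_partition V \<theta> A B C \<and>
     ((clique_cutset V \<theta> C \<and> card C \<le> 3) \<or>
      (stable_2cutset V \<theta> C \<and>
        (\<exists>a b. C = {a, b} \<and> narrow_path \<theta> (A \<union> C) a b \<and> narrow_path \<theta> (B \<union> C) a b)))"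

end

theory Submission
  imports Defs
begin

definition rel :: "('a set \<Rightarrow> int) \<Rightarrow> 'a set \<Rightarrow> 'a \<Rightarrow> 'a \<Rightarrow> bool" where
  "rel \<theta> S = (\<lambda>x y. x \<in> S \<and> y \<in> S \<and> adjacent \<theta> x y)"

definition walk :: "('a set \<Rightarrow> int) \<Rightarrow> 'a set \<Rightarrow> 'a list \<Rightarrow> bool" where
  "walk \<theta> Y p \<longleftrightarrow> p \<noteq> [] \<and> set p \<subseteq> Y \<and> (\<forall>k. Suc k < length p \<longrightarrow> adjacent \<theta> (p!k) (p!Suc k))"

lemma adjacent_sym: "adjacent \<theta> x y = adjacent \<theta> y x"
  unfolding adjacent_def by (auto simp: insert_commute)

lemma walk_take: "walk \<theta> Y p \<Longrightarrow> 0 < n \<Longrightarrow> walk \<theta> Y (take n p)"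
  unfolding walk_def by (auto dest: in_set_takeD)

lemma walk_drop: "walk \<theta> Y p \<Longrightarrow> n < length p \<Longrightarrow> walk \<theta> Y (drop n p)"
  unfolding walk_def by (auto dest: in_set_dropD)

lemma walk_append: "walk \<theta> Y xs \<Longrightarrow> walk \<theta> Y ys \<Longrightarrow> adjacent \<theta> (last xs) (hd ys) \<Longrightarrow> walk \<theta> Y (xs @ ys)"
  unfolding walk_def
proof (intro conjI allI impI)
  fix k assume a: "xs \<noteq> [] \<and> set xs \<subseteq> Y \<and> (\<forall>k. Suc k < length xs \<longrightarrow> adjacent \<theta> (xs ! k) (xs ! Suc k))"
    "ys \<noteq> [] \<and> set ys \<subseteq> Y \<and> (\<forall>k. Suc k < length ys \<longrightarrow> adjacent \<theta> (ys ! k) (ys ! Suc k))"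
    "adjacent \<theta> (last xs) (hd ys)" and k: "Suc k < length (xs @ ys)"
  consider "Suc k < length xs" | "Suc k = length xs" | "length xs \<le> k" by linarith
  then show "adjacent \<theta> ((xs @ ys) ! k) ((xs @ ys) ! Suc k)"
  proof cases
    case 1 then show ?thesis using a by (simp add: nth_append)
  next
    case 2 
    then have "k = length xs - 1" by simp
    then show ?thesis using a 2 by (simp add: nth_append last_conv_nth hd_conv_nth)
  next
    case 3 
    then have "Suc (k - length xs) < length ys" using k by simp
    then have "adjacent \<theta> (ys ! (k - length xs)) (ys ! Suc (k - length xs))" using a by blast
    moreover have "Suc k - length xs = Suc (k - length xs)" using 3 by simp
    ultimately show ?thesis using 3 by (simp add: nth_append)
  qed
qed auto

lemma walk_rtranclp: "(rel \<theta> Y)\<^sup>*\<^sup>* a b \<Longrightarrow> b \<in> Y \<Longrightarrow> \<exists>p. walk \<theta> Y p \<and> hd p = a \<and> last p = b"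
proof (induction rule: converse_rtranclp_induct)
  case base
  then show ?case by (intro exI[of _ "[b]"]) (auto simp: walk_def)
next
  case (step y z)
  then obtain p where p: "walk \<theta> Y p" "hd p = z" "last p = b" by blast
  have "walk \<theta> Y ([y] @ p)"
    using p step(1) by (intro walk_append) (auto simp: walk_def rel_def)
  then show ?case using p by (intro exI[of _ "y # p"]) (auto simp: walk_def)
qed

lemma walk_adj: "walk \<theta> Y p \<Longrightarrow> Suc k < length p \<Longrightarrow> adjacent \<theta> (p!k) (p!Suc k)"
  unfolding walk_def by blast

lemma walk_narrow:
  "walk \<theta> Y p \<Longrightarrow> narrow_path \<theta> Y (hd p) (last p)"
proof (induction "length p" arbitrary: p rule: less_induct)
  case less
  show ?case
  proof (cases "(\<exists>i j. i < j \<and> j < length p \<and> p!i = p!j) \<or>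
                (\<exists>i j. Suc i < j \<and> j < length p \<and> adjacent \<theta> (p!i) (p!j))")
    case True
    then obtain q where q: "walk \<theta> Y q" "length q < length p" "hd q = hd p" "last q = last p"
    proof
      assume "\<exists>i j. i < j \<and> j < length p \<and> p!i = p!j"
      then obtain i j where ij: "i < j" "j < length p" "p!i = p!j" by blast
      show thesis
      proof (cases "i = 0")
        case True
        then show thesis using ij less.prems
          by (intro that[of "drop j p"]) (auto simp: walk_drop hd_drop_conv_nth hd_conv_nth walk_def dest: in_set_dropD)
      next
        case False
        have w: "walk \<theta> Y (take i p @ drop j p)"
        proof (rule walk_append)
          show "walk \<theta> Y (take i p)" using False less.prems walk_take by blast
          show "walk \<theta> Y (drop j p)" using ij less.prems walk_drop by blast
          have "last (take i p) = p ! (i - 1)" using False ij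
            by (subst last_conv_nth) auto
          moreover have "hd (drop j p) = p ! i" using ij by (simp add: hd_drop_conv_nth)
          moreover have "adjacent \<theta> (p!(i-1)) (p!Suc (i-1))" using False ij less.prems
            by (intro walk_adj) auto
          ultimately show "adjacent \<theta> (last (take i p)) (hd (drop j p))" using False by simp
        qed
        show thesis using w ij False less.prems
          by (intro that[of "take i p @ drop j p"]) (auto simp: walk_def)
      qed
    next
      assume "\<exists>i j. Suc i < j \<and> j < length p \<and> adjacent \<theta> (p!i) (p!j)"
      then obtain i j where ij: "Suc i < j" "j < length p" "adjacent \<theta> (p!i) (p!j)" by blast
      have w: "walk \<theta> Y (take (Suc i) p @ drop j p)"
      proof (rule walk_append)
        show "walk \<theta> Y (take (Suc i) p)" using less.prems walk_take by blast
        show "walk \<theta> Y (drop j p)" using ij less.prems walk_drop by blast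
        have "last (take (Suc i) p) = p ! i" using ij
          by (subst last_conv_nth) auto
        moreover have "hd (drop j p) = p ! j" using ij by (simp add: hd_drop_conv_nth)
        ultimately show "adjacent \<theta> (last (take (Suc i) p)) (hd (drop j p))" using ij by simp
      qed
      show thesis using w ij less.prems
        by (intro that[of "take (Suc i) p @ drop j p"]) (auto simp: walk_def)
    qed
    then show ?thesis using less.hyps[of q] by simp
  next
    case False
    then have d: "distinct p" and nc: "\<And>i j. Suc i < j \<Longrightarrow> j < length p \<Longrightarrow> \<not> adjacent \<theta> (p!i) (p!j)"
      by (auto simp: distinct_conv_nth) (metis nat_neq_iff)
    show ?thesis unfolding narrow_path_def
    proof (intro exI[of _ p] conjI allI impI)
      fix i j assume ij: "i < length p" "j < length p" "i \<noteq> j"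
      have ne: "p!i \<noteq> p!j" using d ij by (simp add: nth_eq_iff_index_eq)
      show "(0 \<le> \<theta> {p ! i, p ! j}) = (i = Suc j \<or> j = Suc i)"
      proof
        assume h: "0 \<le> \<theta> {p ! i, p ! j}"
        show "i = Suc j \<or> j = Suc i"
        proof (rule ccontr)
          assume "\<not> (i = Suc j \<or> j = Suc i)"
          then have "Suc i < j \<or> Suc j < i" using ij by linarith
          then show False using nc[of i j] nc[of j i] ij h ne
            by (auto simp: adjacent_def insert_commute)
        qed
      next
        assume "i = Suc j \<or> j = Suc i"
        then show "0 \<le> \<theta> {p ! i, p ! j}"
          using walk_adj[OF less.prems, of j] walk_adj[OF less.prems, of i] ij
          by (auto simp: adjacent_def insert_commute)
      qed
    qed (use less.prems d in \<open>auto simp: walk_def\<close>)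
  qed
qed


definition compo :: "('a set \<Rightarrow> int) \<Rightarrow> 'a set \<Rightarrow> 'a \<Rightarrow> 'a set" where
  "compo \<theta> S u = {v. (rel \<theta> S)\<^sup>*\<^sup>* u v}"

lemma connected_sub_rel: "connected_sub \<theta> S = (\<forall>u\<in>S. \<forall>v\<in>S. (rel \<theta> S)\<^sup>*\<^sup>* u v)"
  unfolding connected_sub_def rel_def by simp

lemma rel_sym: "(rel \<theta> S)\<^sup>*\<^sup>* x y \<Longrightarrow> (rel \<theta> S)\<^sup>*\<^sup>* y x"
proof -
  have "symp (rel \<theta> S)" unfolding symp_def rel_def using adjacent_sym by metis
  then have "symp ((rel \<theta> S)\<^sup>*\<^sup>*)" by (rule symp_rtranclp)
  then show "(rel \<theta> S)\<^sup>*\<^sup>* x y \<Longrightarrow> (rel \<theta> S)\<^sup>*\<^sup>* y x" by (meson sympD)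
qed

lemma rel_in: "(rel \<theta> S)\<^sup>*\<^sup>* u v \<Longrightarrow> u \<in> S \<Longrightarrow> v \<in> S"
  by (induction rule: rtranclp_induct) (auto simp: rel_def)

lemma comp_sub: "u \<in> S \<Longrightarrow> compo \<theta> S u \<subseteq> S"
  unfolding compo_def using rel_in by fast

lemma comp_self: "compo \<theta> S u \<supseteq> {u}"
  unfolding compo_def by auto

lemma comp_closed: "u \<in> S \<Longrightarrow> x \<in> compo \<theta> S u \<Longrightarrow> y \<in> S \<Longrightarrow> adjacent \<theta> x y \<Longrightarrow> y \<in> compo \<theta> S u"
  unfolding compo_def
  by (metis (no_types, lifting) mem_Collect_eq rel_def rel_in rtranclp.rtrancl_into_rtrancl)

lemma comp_within: "(rel \<theta> S)\<^sup>*\<^sup>* u x \<Longrightarrow> u \<in> S \<Longrightarrow> (rel \<theta> (compo \<theta> S u))\<^sup>*\<^sup>* u x"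
proof (induction rule: rtranclp_induct)
  case base then show ?case by simp
next
  case (step y z)
  have "y \<in> compo \<theta> S u" "z \<in> compo \<theta> S u" using step unfolding compo_def
    by (auto intro: rtranclp.rtrancl_into_rtrancl)
  then have "rel \<theta> (compo \<theta> S u) y z" using step(2) by (auto simp: rel_def)
  then show ?case using step by (meson rtranclp.rtrancl_into_rtrancl)
qed

lemma rel_mono: "S \<subseteq> T \<Longrightarrow> (rel \<theta> S)\<^sup>*\<^sup>* x y \<Longrightarrow> (rel \<theta> T)\<^sup>*\<^sup>* x y"
proof -
  assume "S \<subseteq> T" "(rel \<theta> S)\<^sup>*\<^sup>* x y"
  moreover have "\<And>a b. rel \<theta> S a b \<longrightarrow> rel \<theta> T a b" using \<open>S \<subseteq> T\<close> by (auto simp: rel_def)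
  ultimately show ?thesis by (metis (no_types, lifting) mono_rtranclp)
qed

lemma notadj_neg: "trigraph V \<theta> \<Longrightarrow> x \<in> V \<Longrightarrow> y \<in> V \<Longrightarrow> x \<noteq> y \<Longrightarrow> \<not> adjacent \<theta> x y \<Longrightarrow> \<theta> {x,y} = -1"
  unfolding trigraph_def adjacent_def by force

lemma cp_disconn:
  assumes "cut_partition V \<theta> A B C"
  shows "\<not> connected_sub \<theta> (V - C)"
proof
  assume c: "connected_sub \<theta> (V - C)"
  obtain a b where ab: "a \<in> A" "b \<in> B" using assms unfolding cut_partition_def by blast
  have inV: "a \<in> V - C" "b \<in> V - C" using ab assms unfolding cut_partition_def by auto
  have r: "(rel \<theta> (V - C))\<^sup>*\<^sup>* a b" using c inV unfolding connected_sub_rel by blast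
  have "\<And>y. (rel \<theta> (V - C))\<^sup>*\<^sup>* a y \<Longrightarrow> y \<in> A"
  proof -
    fix y assume "(rel \<theta> (V - C))\<^sup>*\<^sup>* a y"
    then show "y \<in> A"
    proof (induction rule: rtranclp_induct)
      case base then show ?case using ab by simp
    next
      case (step y z)
      then have "z \<in> V - C" "adjacent \<theta> y z" by (auto simp: rel_def)
      then have "z \<in> A \<or> z \<in> B" using assms unfolding cut_partition_def by auto
      moreover have "z \<notin> B"
      proof
        assume "z \<in> B"
        then have "\<theta> {y, z} = -1" using step assms unfolding cut_partition_def by blast
        then show False using \<open>adjacent \<theta> y z\<close> unfolding adjacent_def by simp
      qed
      ultimately show ?case by blast
    qed
  qed
  then have "b \<in> A" using r by blast
  then show False using ab assms unfolding cut_partition_def by blast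
qed

lemma disconn_split:
  assumes tg: "trigraph V \<theta>" and CV: "C \<subseteq> V" and nc: "\<not> connected_sub \<theta> (V - C)"
  shows "\<exists>A B. cut_partition V \<theta> A B C"
proof -
  obtain u w where uw: "u \<in> V - C" "w \<in> V - C" "\<not> (rel \<theta> (V - C))\<^sup>*\<^sup>* u w"
  proof -
    have "\<not> (\<forall>u\<in>V - C. \<forall>v\<in>V - C. (rel \<theta> (V - C))\<^sup>*\<^sup>* u v)"
      using nc connected_sub_rel by metis
    then show ?thesis using that by blast
  qed
  define A where "A = compo \<theta> (V - C) u"
  define B where "B = V - C - A"
  have As: "A \<subseteq> V - C" using comp_sub[of u "V - C" \<theta>] uw(1) unfolding A_def by simp
  have "u \<in> A" unfolding A_def compo_def by (simp add: rtranclp.rtrancl_refl)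
  moreover have "w \<in> B" using uw unfolding B_def A_def compo_def by (simp only: mem_Collect_eq Diff_iff) blast
  moreover have "\<forall>x\<in>A. \<forall>y\<in>B. \<theta> {x,y} = -1"
  proof (intro ballI)
    fix x y assume xy: "x \<in> A" "y \<in> B"
    have y: "y \<in> V - C" "y \<notin> A" using xy unfolding B_def by auto
    have "\<not> adjacent \<theta> x y"
    proof
      assume "adjacent \<theta> x y"
      then have "y \<in> A" using comp_closed[of u "V - C" x \<theta> y] uw(1) xy(1) y(1) unfolding A_def by blast
      then show False using y by blast
    qed
    moreover have "x \<noteq> y" using xy(1) y(2) by blast
    moreover have "x \<in> V" "y \<in> V" using xy(1) As y by auto
    ultimately show "\<theta> {x,y} = -1" using notadj_neg[OF tg] by blast
  qed
  moreover have "A \<union> B \<union> C = V" "A \<inter> B = {}" "A \<inter> C = {}" "B \<inter> C = {}"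
    using As CV unfolding B_def by auto
  ultimately have "cut_partition V \<theta> A B C" unfolding cut_partition_def by blast
  then show ?thesis by blast
qed

lemma conn_path: "(rel \<theta> Y)\<^sup>*\<^sup>* a b \<Longrightarrow> b \<in> Y \<Longrightarrow> narrow_path \<theta> Y a b"
  using walk_rtranclp walk_narrow by metis

lemma comp_link:
  assumes "u \<in> S" "x \<in> compo \<theta> S u" "y \<in> compo \<theta> S u" "compo \<theta> S u \<subseteq> Y" "a \<in> Y" "b \<in> Y"
    "adjacent \<theta> a x" "adjacent \<theta> b y"
  shows "(rel \<theta> Y)\<^sup>*\<^sup>* a b"
proof -
  have "(rel \<theta> S)\<^sup>*\<^sup>* u x" "(rel \<theta> S)\<^sup>*\<^sup>* u y" using assms(2,3) unfolding compo_def by auto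
  then have "(rel \<theta> (compo \<theta> S u))\<^sup>*\<^sup>* u x" "(rel \<theta> (compo \<theta> S u))\<^sup>*\<^sup>* u y"
    using comp_within assms(1) by metis+
  then have 1: "(rel \<theta> Y)\<^sup>*\<^sup>* u x" and 2: "(rel \<theta> Y)\<^sup>*\<^sup>* u y"
    using rel_mono[OF assms(4)] by metis+
  have 3: "rel \<theta> Y a x" "rel \<theta> Y b y" using assms by (auto simp: rel_def)
  have "(rel \<theta> Y)\<^sup>*\<^sup>* a u" using rel_sym[OF 1] 3(1) by (rule converse_rtranclp_into_rtranclp[rotated])
  moreover have "(rel \<theta> Y)\<^sup>*\<^sup>* y b" using rel_sym 3(2) by (meson r_into_rtranclp)
  ultimately show ?thesis using 2 by (meson rtranclp_trans)
qed


lemma one_side: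
  assumes tg: "trigraph V \<theta>" and aV: "a \<in> V" and bV: "b \<in> V" and ab: "a \<noteq> b" and u: "u \<in> V - {a,b}"
    and na: "\<forall>x\<in>compo \<theta> (V - {a,b}) u. \<not> adjacent \<theta> a x"
  shows "\<exists>A B C. good_cut_partition V \<theta> A B C"
proof -
  define A where "A = compo \<theta> (V - {a,b}) u"
  define B where "B = V - {b} - A"
  have As: "A \<subseteq> V - {a,b}" using comp_sub[of u "V - {a,b}" \<theta>] u unfolding A_def by simp
  have "u \<in> A" unfolding A_def compo_def by (simp add: rtranclp.rtrancl_refl)
  moreover have "a \<in> B" using As ab aV unfolding B_def by auto
  moreover have "\<forall>x\<in>A. \<forall>y\<in>B. \<theta> {x,y} = -1"
  proof (intro ballI)
    fix x y assume xA: "x \<in> A" and yB: "y \<in> B"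
    have xS: "x \<in> V - {a,b}" using As xA by auto
    have yV: "y \<in> V" "y \<noteq> b" "y \<notin> A" using yB unfolding B_def by auto
    have "\<not> adjacent \<theta> x y"
    proof (cases "y = a")
      case True then show ?thesis using na xA adjacent_sym[of \<theta> a x] unfolding A_def by auto
    next
      case False
      then have yS: "y \<in> V - {a,b}" using yV by auto
      show ?thesis
      proof
        assume "adjacent \<theta> x y"
        then have "y \<in> A" using comp_closed[of u "V - {a,b}" x \<theta> y] u xA yS unfolding A_def by simp
        then show False using yV by simp
      qed
    qed
    moreover have "x \<noteq> y" using xA yV by auto
    ultimately show "\<theta> {x,y} = -1" using notadj_neg[OF tg, of x y] xS yV by auto
  qed
  moreover have "A \<union> B \<union> {b} = V" "A \<inter> B = {}" "A \<inter> {b} = {}" "B \<inter> {b} = {}"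
    using As bV unfolding B_def by auto
  ultimately have cp: "cut_partition V \<theta> A B {b}" unfolding cut_partition_def by auto
  have "strong_clique V \<theta> {b}" using bV unfolding strong_clique_def by simp
  then have "clique_cutset V \<theta> {b}"
    using cp_disconn[OF cp] unfolding clique_cutset_def by simp
  then have "good_cut_partition V \<theta> A B {b}" using cp unfolding good_cut_partition_def by simp
  then show ?thesis by auto
qed


lemma pe2: "path_edges [x,y] = {{x,y}}"
  unfolding path_edges_def by auto

lemma clique_le3:
  assumes tg: "trigraph V \<theta>" and fr: "isk4_wheel_free V \<theta>" and sc: "strong_clique V \<theta> C"
  shows "card C \<le> 3"
proof (rule ccontr)
  assume "\<not> card C \<le> 3"
  then have c4: "card {..<4::nat} \<le> card C" by simp
  have CV: "C \<subseteq> V" using sc unfolding strong_clique_def by simp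
  have fin: "finite C" using tg CV finite_subset unfolding trigraph_def by auto
  obtain b :: "nat \<Rightarrow> 'a" where bC: "b ` {..<4} \<subseteq> C" and binj: "inj_on b {..<4}"
    using card_le_inj[OF finite_lessThan fin c4] by auto
  define X where "X = b ` {..<4::nat}"
  define E where "E = {{u,v} | u v. u \<in> V \<and> v \<in> V \<and> u \<noteq> v \<and> \<theta> {u,v} \<ge> 0}"
  have real: "realization V \<theta> E"
    unfolding realization_def
  proof (intro conjI ballI impI)
    show "E \<subseteq> {{u, v} |u v. u \<in> V \<and> v \<in> V \<and> u \<noteq> v}" unfolding E_def by auto
  next
    fix u v assume "u \<in> V" "v \<in> V" "u \<noteq> v" "\<theta> {u,v} = 1"
    then show "{u,v} \<in> E" unfolding E_def by force
  next
    fix u v assume "u \<in> V" "v \<in> V" "u \<noteq> v" "\<theta> {u,v} = -1"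
    then show "{u,v} \<notin> E" unfolding E_def by (smt (verit) mem_Collect_eq)
  qed
  have XV: "X \<subseteq> V" using bC CV unfolding X_def by auto
  have bne: "\<And>i j. i < j \<Longrightarrow> j < 4 \<Longrightarrow> b i \<noteq> b j"
    using binj unfolding inj_on_def by (metis lessThan_iff less_trans nat_neq_iff)
  have IE: "induced_edges E X = {{b i, b j} | i j. i < j \<and> j < 4}"
  proof
    show "induced_edges E X \<subseteq> {{b i, b j} | i j. i < j \<and> j < 4}"
    proof
      fix e assume "e \<in> induced_edges E X"
      then obtain u v where e: "e = {u,v}" "u \<noteq> v" "u \<in> X" "v \<in> X"
        unfolding induced_edges_def E_def by auto
      then obtain i j where ij: "u = b i" "v = b j" "i < 4" "j < 4" unfolding X_def by auto
      then have "i \<noteq> j" using e by auto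
      then have "i < j \<or> j < i" by arith
      then show "e \<in> {{b i, b j} | i j. i < j \<and> j < 4}"
      proof
        assume "i < j" then show ?thesis using e ij by auto
      next
        assume "j < i" then show ?thesis using e ij by (auto simp: insert_commute)
      qed
    qed
  next
    show "{{b i, b j} | i j. i < j \<and> j < 4} \<subseteq> induced_edges E X"
    proof
      fix e assume "e \<in> {{b i, b j} | i j. i < j \<and> j < 4}"
      then obtain i j where ij: "e = {b i, b j}" "i < j" "j < 4" by auto
      have inX: "b i \<in> X" "b j \<in> X" using ij unfolding X_def by auto
      have "\<theta> {b i, b j} = 1" using sc inX bC bne[OF ij(2,3)] unfolding strong_clique_def X_def by blast
      then have "e \<in> E" using ij inX XV bne[OF ij(2,3)] unfolding E_def by force
      then show "e \<in> induced_edges E X" using ij inX unfolding induced_edges_def by auto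
    qed
  qed
  have "\<not> is_isk4 X (induced_edges E X)"
    using fr real XV unfolding isk4_wheel_free_def by blast
  moreover have "is_isk4 X (induced_edges E X)"
    unfolding is_isk4_def
  proof (intro exI[of _ b] exI[of _ "\<lambda>i j. [b i, b j]"] conjI allI impI)
    show "inj_on b {..<4}" by (rule binj)
  next
    fix i j :: nat assume ij: "i < j \<and> j < 4"
    then show "distinct [b i, b j]" using bne by auto
    show "2 \<le> length [b i, b j]" by simp
    show "hd [b i, b j] = b i" by simp
    show "last [b i, b j] = b j" by simp
    show "set [b i, b j] \<inter> b ` {..<4} = {b i, b j}" using ij by auto
  next
    fix i j k l :: nat assume "i < j \<and> j < 4 \<and> k < l \<and> l < 4 \<and> (i, j) \<noteq> (k, l)"
    then show "set [b i, b j] \<inter> set [b k, b l] \<subseteq> b ` {..<4}" by auto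
  next
    show "X = \<Union> {set [b i, b j] |i j. i < j \<and> j < 4}"
    proof
      show "X \<subseteq> \<Union> {set [b i, b j] |i j. i < j \<and> j < 4}"
      proof
        fix x assume "x \<in> X"
        then obtain k where k: "x = b k" "k < 4" unfolding X_def by auto
        show "x \<in> \<Union> {set [b i, b j] |i j. i < j \<and> j < 4}"
        proof (cases "k = 0")
          case True
          then have "x \<in> set [b 0, b 1]" using k by simp
          moreover have "set [b 0, b 1] \<in> {set [b i, b j] |i j. i < j \<and> j < 4}" by fastforce
          ultimately show ?thesis by blast
        next
          case False
          then have "x \<in> set [b 0, b k]" using k by simp
          moreover have "set [b 0, b k] \<in> {set [b i, b j] |i j. i < j \<and> j < 4}" using False k by fastforce
          ultimately show ?thesis by blast
        qed
      qed
      show "\<Union> {set [b i, b j] |i j. i < j \<and> j < 4} \<subseteq> X" unfolding X_def by auto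
    qed
  next
    show "induced_edges E X = \<Union> {path_edges [b i, b j] |i j. i < j \<and> j < 4}"
      unfolding IE pe2 by blast
  qed
  ultimately show False by simp
qed


lemma comp_cut:
  assumes tg: "trigraph V \<theta>" and CV: "C \<subseteq> V" and uw: "u \<in> V - C" "w \<in> V - C" "\<not> (rel \<theta> (V - C))\<^sup>*\<^sup>* u w"
  shows "cut_partition V \<theta> (compo \<theta> (V - C) u) (V - C - compo \<theta> (V - C) u) C"
proof -
  define A where "A = compo \<theta> (V - C) u"
  define B where "B = V - C - A"
  have As: "A \<subseteq> V - C" using comp_sub[of u "V - C" \<theta>] uw(1) unfolding A_def by simp
  have "u \<in> A" unfolding A_def compo_def by (simp add: rtranclp.rtrancl_refl)
  moreover have "w \<in> B" using uw unfolding B_def A_def compo_def by (simp only: mem_Collect_eq Diff_iff) blast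
  moreover have "\<forall>x\<in>A. \<forall>y\<in>B. \<theta> {x,y} = -1"
  proof (intro ballI)
    fix x y assume xy: "x \<in> A" "y \<in> B"
    have y: "y \<in> V - C" "y \<notin> A" using xy unfolding B_def by auto
    have "\<not> adjacent \<theta> x y"
    proof
      assume "adjacent \<theta> x y"
      then have "y \<in> A" using comp_closed[of u "V - C" x \<theta> y] uw(1) xy(1) y(1) unfolding A_def by blast
      then show False using y by blast
    qed
    moreover have "x \<noteq> y" using xy(1) y(2) by blast
    moreover have "x \<in> V" "y \<in> V" using xy(1) As y by auto
    ultimately show "\<theta> {x,y} = -1" using notadj_neg[OF tg, of x y] by blast
  qed
  moreover have "A \<union> B \<union> C = V" "A \<inter> B = {}" "A \<inter> C = {}" "B \<inter> C = {}"
    using As CV unfolding B_def by auto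
  ultimately show ?thesis unfolding cut_partition_def A_def B_def by blast
qed

theorem proposition4p2:
  fixes V :: "'a set" and \<theta> :: "'a set \<Rightarrow> int"
  assumes "trigraph V \<theta>" and "isk4_wheel_free V \<theta>"
  shows "((\<exists>C. clique_cutset V \<theta> C) \<or> (\<exists>C. stable_2cutset V \<theta> C)) \<longleftrightarrow>
         (\<exists>A B C. good_cut_partition V \<theta> A B C)"
proof
  assume "\<exists>A B C. good_cut_partition V \<theta> A B C"
  then show "(\<exists>C. clique_cutset V \<theta> C) \<or> (\<exists>C. stable_2cutset V \<theta> C)"
    unfolding good_cut_partition_def by blast
next
  assume "(\<exists>C. clique_cutset V \<theta> C) \<or> (\<exists>C. stable_2cutset V \<theta> C)"
  then show "\<exists>A B C. good_cut_partition V \<theta> A B C"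
  proof
    assume "\<exists>C. clique_cutset V \<theta> C"
    then obtain C where cc: "clique_cutset V \<theta> C" by blast
    have sc: "strong_clique V \<theta> C" and nc: "\<not> connected_sub \<theta> (V - C)"
      using cc unfolding clique_cutset_def by auto
    have CV: "C \<subseteq> V" using sc unfolding strong_clique_def by simp
    have "card C \<le> 3" using clique_le3[OF assms sc] .
    moreover obtain A B where "cut_partition V \<theta> A B C" using disconn_split[OF assms(1) CV nc] by blast
    ultimately have "good_cut_partition V \<theta> A B C" using cc unfolding good_cut_partition_def by simp
    then show ?thesis by blast
  next
    assume "\<exists>C. stable_2cutset V \<theta> C"
    then obtain C where s2: "stable_2cutset V \<theta> C" by blast
    then obtain a b where C: "C = {a,b}" and ab: "a \<noteq> b"
      unfolding stable_2cutset_def by (meson card_2_iff)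
    have CV: "C \<subseteq> V" using s2 unfolding stable_2cutset_def stable_set_def by simp
    then have aV: "a \<in> V" and bV: "b \<in> V" using C by auto
    have nc: "\<not> connected_sub \<theta> (V - C)" using s2 unfolding stable_2cutset_def by simp
    define S where "S = V - C"
    obtain u w where uw: "u \<in> S" "w \<in> S" "\<not> (rel \<theta> S)\<^sup>*\<^sup>* u w"
    proof -
      have "\<not> (\<forall>u\<in>V - C. \<forall>v\<in>V - C. (rel \<theta> (V - C))\<^sup>*\<^sup>* u v)"
        using nc connected_sub_rel by metis
      then show ?thesis using that unfolding S_def by blast
    qed
    have Sab: "S = V - {a,b}" "S = V - {b,a}" unfolding S_def C by auto
    define D where "D = compo \<theta> S u"
    define D2 where "D2 = compo \<theta> S w"
    show ?thesis
    proof (cases "(\<forall>x\<in>D. \<not> adjacent \<theta> a x) \<or> (\<forall>x\<in>D. \<not> adjacent \<theta> b x) \<or>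
                  (\<forall>x\<in>D2. \<not> adjacent \<theta> a x) \<or> (\<forall>x\<in>D2. \<not> adjacent \<theta> b x)")
      case True
      then show ?thesis
      proof (elim disjE)
        assume "\<forall>x\<in>D. \<not> adjacent \<theta> a x"
        then show ?thesis using one_side[OF assms(1) aV bV ab, of u] uw Sab unfolding D_def by auto
      next
        assume "\<forall>x\<in>D. \<not> adjacent \<theta> b x"
        then show ?thesis using one_side[OF assms(1) bV aV ab[symmetric], of u] uw Sab unfolding D_def by auto
      next
        assume "\<forall>x\<in>D2. \<not> adjacent \<theta> a x"
        then show ?thesis using one_side[OF assms(1) aV bV ab, of w] uw Sab unfolding D2_def by auto
      next
        assume "\<forall>x\<in>D2. \<not> adjacent \<theta> b x"
        then show ?thesis using one_side[OF assms(1) bV aV ab[symmetric], of w] uw Sab unfolding D2_def by auto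
      qed
    next
      case False
      then obtain x1 y1 x2 y2 where xy: "x1 \<in> D" "adjacent \<theta> a x1" "y1 \<in> D" "adjacent \<theta> b y1"
        "x2 \<in> D2" "adjacent \<theta> a x2" "y2 \<in> D2" "adjacent \<theta> b y2" by blast
      define B where "B = S - D"
      have cp: "cut_partition V \<theta> D B C"
        using comp_cut[OF assms(1) CV, of u w] uw unfolding D_def B_def S_def by simp
      have DS: "D \<subseteq> S" using comp_sub[of u S \<theta>] uw(1) unfolding D_def by simp
      have D2S: "D2 \<subseteq> S" using comp_sub[of w S \<theta>] uw(2) unfolding D2_def by simp
      have disj: "D \<inter> D2 = {}"
      proof (rule ccontr)
        assume "D \<inter> D2 \<noteq> {}"
        then obtain v where "v \<in> D" "v \<in> D2" by blast
        then have "(rel \<theta> S)\<^sup>*\<^sup>* u v" "(rel \<theta> S)\<^sup>*\<^sup>* w v" unfolding D_def D2_def compo_def by auto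
        then have "(rel \<theta> S)\<^sup>*\<^sup>* u w" using rel_sym[of \<theta> S w v] by (meson rtranclp_trans)
        then show False using uw(3) by simp
      qed
      have D2B: "D2 \<subseteq> B" using D2S disj unfolding B_def by auto
      have p1: "narrow_path \<theta> (D \<union> C) a b"
      proof (rule conn_path)
        show "(rel \<theta> (D \<union> C))\<^sup>*\<^sup>* a b"
          using comp_link[of u S x1 \<theta> y1 "D \<union> C" a b] uw(1) xy(1-4) C unfolding D_def by auto
        show "b \<in> D \<union> C" using C by simp
      qed
      have p2: "narrow_path \<theta> (B \<union> C) a b"
      proof (rule conn_path)
        show "(rel \<theta> (B \<union> C))\<^sup>*\<^sup>* a b"
          using comp_link[of w S x2 \<theta> y2 "B \<union> C" a b] uw(2) xy(5-8) C D2B unfolding D2_def by auto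
        show "b \<in> B \<union> C" using C by simp
      qed
      have "good_cut_partition V \<theta> D B C"
        unfolding good_cut_partition_def using cp s2 C p1 p2 by blast
      then show ?thesis by blast
    qed
  qed
qed

end
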